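(* Assume $\mathrm{recc}(C)\subseteq\mathrm{recc}(P^B)$. Let $D\subseteq N_1\cup N_2$ and $S\subseteq M_D$. Then every $x\in P^B\setminus G_D^C$ satisfies $$\sum_{j\in S}\frac{x_j}{\alpha_j}-\sum_{j\in N\setminus D}\frac{x_j}{\varepsilon_j(S)}\le 1.$$
   Context: Let $A\in\mathbb{R}^{m\times n}$ have full row rank, $b\in\mathbb{R}^m$, and $P=\{x\in\mathbb{R}^n_+:Ax=b\}$. Let $C\subseteq\mathbb{R}^n$ be an open convex set. Fix a basis $B$ of $P$ with nonbasic set $N=\{1,\dots,n\}\setminus B$. Write $P=\{x:x_i=\bar b_i-\sum_{j\in N}\bar a_{ij}x_j\ (i\in B),\ x_j\ge0\ (j=1,\dots,n)\}$ with $\bar b\ge0$. The basic solution $\bar x$ has $\bar x_i=\bar b_i$ ($i\in B$) and $0$ ($i\in N$). $P^B$ is obtained by dropping $x_i\ge0$ for $i\in B$. For $j\in N$, $\bar r^j$ has $\bar r^j_k=-\bar a_{kj}$ ($k\in B$), $\bar r^j_j=1$, and $0$ otherwise. Thus $P^B=\{\bar x+\sum_{j\in N}x_j\bar r^j:x_j\ge0\}$, and for $x\in P^B$ the $x_j$ ($j\in N$) are the coefficients in this representation. It is assumed that $\bar x\notin\mathrm{cl}(C)$. For $j\in N$, $\alpha_j=\inf\{\lambda\ge0:\bar x+\lambda\bar r^j\in C\}$ and $\beta_j=\sup\{\lambda\ge0:\bar x+\lambda\bar r^j\in C\}$, with $\alpha_j=+\infty$, $\beta_j=-\infty$ if that halfline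 misses $C$. Define - $N_1=\{j:\alpha_j\in(0,\infty),\beta_j=+\infty\}$; - $N_2=\{j:\alpha_j\in(0,\infty),\beta_j\in(\alpha_j,\infty)\}$. For a set $K$, $\mathrm{recc}(K)=\{d:x+\lambda d\in K\ \forall x\in K,\lambda\ge0\}$. We use the convention $t/+\infty=0$. For $D\subseteq N_1\cup N_2$, define $G_D=\{\bar x\}+\mathrm{conv}\big(\bigcup_{j\in D}\{\lambda\bar r^j:\lambda>\alpha_j\}\big)$ and $G_D^C=G_D+\mathrm{recc}(C)$. For $(i,j)\in D\times(N\setminus D)$ let $\gamma_{ij}=\sup\{\gamma\ge0:\alpha_i\bar r^i+\gamma\bar r^j\in\mathrm{recc}(G_D^C)\}$. Let $M_D=\{i\in D:\gamma_{ij}>0\ \forall j\in N\setminus D\}$. For $S\subseteq M_D$ and $j\in N\setminus D$, let $\varepsilon_j(S)=\min_{i\in S}\gamma_{ij}$ if $S\neq\emptyset$, and $\varepsilon_j(\emptyset)=+\infty$. *)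

theory Defs
  imports "HOL-Analysis.Analysis" "HOL-Library.Extended_Real"
begin

text \<open>Data: A :: real^'n^'m (m x n matrix), b :: real^'m, B a set of column indices
 (nonbasic set N = UNIV - B).\<close>

definition recc :: "('a::real_vector) set \<Rightarrow> 'a set" where
  "recc K = {d. \<forall>x\<in>K. \<forall>t::real. t \<ge> 0 \<longrightarrow> x + t *\<^sub>R d \<in> K}"

definition is_basis :: "real^'n^'m \<Rightarrow> 'n set \<Rightarrow> bool" where
  "is_basis A B \<longleftrightarrow> card B = CARD('m) \<and> inj_on (\<lambda>k. column k A) B
      \<and> independent ((\<lambda>k. column k A) ` B)"

definition basic_sol :: "real^'n^'m \<Rightarrow> real^'m \<Rightarrow> 'n set \<Rightarrow> real^'n" where
  "basic_sol A b B = (THE x. A *v x = b \<and> (\<forall>k. k \<notin> B \<longrightarrow> x $ k = 0))"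

text \<open>the ray r^j: components -abar_kj on B, 1 at j, 0 elsewhere, i.e. A r = 0\<close>
definition ray :: "real^'n^'m \<Rightarrow> 'n set \<Rightarrow> 'n \<Rightarrow> real^'n" where
  "ray A B j = (THE r. A *v r = 0 \<and> r $ j = 1 \<and> (\<forall>k. k \<notin> B \<and> k \<noteq> j \<longrightarrow> r $ k = 0))"

text \<open>P^B: drop the nonnegativity of basic variables\<close>
definition PB :: "real^'n^'m \<Rightarrow> real^'m \<Rightarrow> 'n set \<Rightarrow> (real^'n) set" where
  "PB A b B = {x. A *v x = b \<and> (\<forall>k. k \<notin> B \<longrightarrow> 0 \<le> x $ k)}"

definition alpha :: "real^'n^'m \<Rightarrow> real^'m \<Rightarrow> 'n set \<Rightarrow> (real^'n) set \<Rightarrow> 'n \<Rightarrow> ereal" where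
  "alpha A b B C j = Inf (ereal ` {t. 0 \<le> t \<and> basic_sol A b B + t *\<^sub>R ray A B j \<in> C})"

definition beta :: "real^'n^'m \<Rightarrow> real^'m \<Rightarrow> 'n set \<Rightarrow> (real^'n) set \<Rightarrow> 'n \<Rightarrow> ereal" where
  "beta A b B C j = Sup (ereal ` {t. 0 \<le> t \<and> basic_sol A b B + t *\<^sub>R ray A B j \<in> C})"

definition N1 :: "real^'n^'m \<Rightarrow> real^'m \<Rightarrow> 'n set \<Rightarrow> (real^'n) set \<Rightarrow> 'n set" where
  "N1 A b B C = {j. j \<notin> B \<and> 0 < alpha A b B C j \<and> alpha A b B C j < \<infinity>
                    \<and> beta A b B C j = \<infinity>}"

definition N2 :: "real^'n^'m \<Rightarrow> real^'m \<Rightarrow> 'n set \<Rightarrow> (real^'n) set \<Rightarrow> 'n set" where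
  "N2 A b B C = {j. j \<notin> B \<and> 0 < alpha A b B C j \<and> alpha A b B C j < \<infinity>
                    \<and> alpha A b B C j < beta A b B C j \<and> beta A b B C j < \<infinity>}"

definition G :: "real^'n^'m \<Rightarrow> real^'m \<Rightarrow> 'n set \<Rightarrow> (real^'n) set \<Rightarrow> 'n set \<Rightarrow> (real^'n) set" where
  "G A b B C D = (\<lambda>y. basic_sol A b B + y) `
      (convex hull (\<Union>j\<in>D. {t *\<^sub>R ray A B j | t. ereal t > alpha A b B C j}))"

definition GC :: "real^'n^'m \<Rightarrow> real^'m \<Rightarrow> 'n set \<Rightarrow> (real^'n) set \<Rightarrow> 'n set \<Rightarrow> (real^'n) set" where
  "GC A b B C D = {g + d | g d. g \<in> G A b B C D \<and> d \<in> recc C}"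

definition gamma :: "real^'n^'m \<Rightarrow> real^'m \<Rightarrow> 'n set \<Rightarrow> (real^'n) set \<Rightarrow> 'n set \<Rightarrow> 'n \<Rightarrow> 'n \<Rightarrow> ereal" where
  "gamma A b B C D i j = Sup (ereal ` {g. 0 \<le> g \<and>
      real_of_ereal (alpha A b B C i) *\<^sub>R ray A B i + g *\<^sub>R ray A B j \<in> recc (GC A b B C D)})"

definition M :: "real^'n^'m \<Rightarrow> real^'m \<Rightarrow> 'n set \<Rightarrow> (real^'n) set \<Rightarrow> 'n set \<Rightarrow> 'n set" where
  "M A b B C D = {i \<in> D. \<forall>j. j \<notin> B \<and> j \<notin> D \<longrightarrow> gamma A b B C D i j > 0}"

definition eps :: "real^'n^'m \<Rightarrow> real^'m \<Rightarrow> 'n set \<Rightarrow> (real^'n) set \<Rightarrow> 'n set \<Rightarrow> 'n set \<Rightarrow> 'n \<Rightarrow> ereal" where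
  "eps A b B C D S j = (if S = {} then \<infinity> else Min ((\<lambda>i. gamma A b B C D i j) ` S))"

text \<open>t / e for an extended real e, with the convention t / +infinity = 0\<close>
definition ediv :: "real \<Rightarrow> ereal \<Rightarrow> real" where
  "ediv t e = (if e = \<infinity> then 0 else t / real_of_ereal e)"

end

theory Submission
  imports Defs
begin


lemma basis_exists:
  fixes A :: "real^'n^'m"
  assumes "is_basis A B"
  shows "\<exists>v. A *v v = y \<and> (\<forall>k. k \<notin> B \<longrightarrow> v $ k = 0)"
proof -
  let ?c = "\<lambda>k. column k A"
  have inj: "inj_on ?c B" and ind: "independent (?c ` B)" and cB: "card B = CARD('m)"
    using assms unfolding is_basis_def by auto
  have "card (?c ` B) = CARD('m)" using inj cB card_image by fastforce
  hence "(UNIV :: (real^'m) set) \<subseteq> span (?c ` B)"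
    using card_ge_dim_independent[of "?c ` B" UNIV] ind by simp
  hence ys: "y \<in> span (?c ` B)" by auto
  have fin: "finite (?c ` B)" by simp
  have "y \<in> range (\<lambda>u. \<Sum>w\<in>?c ` B. u w *\<^sub>R w)"
    using ys unfolding span_finite[OF fin] .
  then obtain u where u: "(\<Sum>w\<in>?c ` B. u w *\<^sub>R w) = y" by blast
  define v where "v = (\<chi> k. if k \<in> B then u (?c k) else 0)"
  have "A *v v = (\<Sum>k\<in>UNIV. (v$k) *s ?c k)" by (rule matrix_mult_sum)
  also have "\<dots> = (\<Sum>k\<in>B. u (?c k) *\<^sub>R ?c k)"
    by (rule sum.mono_neutral_cong_right) (auto simp: v_def scalar_mult_eq_scaleR)
  also have "\<dots> = (\<Sum>w\<in>?c ` B. u w *\<^sub>R w)"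
    using sum.reindex[OF inj, of "\<lambda>w. u w *\<^sub>R w"] by simp
  finally show ?thesis using u by (intro exI[of _ v]) (auto simp: v_def)
qed

lemma basis_unique:
  fixes A :: "real^'n^'m"
  assumes "is_basis A B" "A *v v = 0" "\<forall>k. k \<notin> B \<longrightarrow> v $ k = 0"
  shows "v = 0"
proof -
  let ?c = "\<lambda>k. column k A"
  have inj: "inj_on ?c B" and ind: "independent (?c ` B)"
    using assms unfolding is_basis_def by auto
  have "0 = (\<Sum>k\<in>UNIV. (v$k) *s ?c k)" using assms(2) matrix_mult_sum by metis
  also have "\<dots> = (\<Sum>k\<in>B. v$k *\<^sub>R ?c k)"
    by (rule sum.mono_neutral_cong_right) (auto simp: assms(3) scalar_mult_eq_scaleR)
  also have "\<dots> = (\<Sum>w\<in>?c ` B. v $ (inv_into B ?c w) *\<^sub>R w)"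
    using sum.reindex[OF inj, of "\<lambda>w. v $ (inv_into B ?c w) *\<^sub>R w"] inv_into_f_f[OF inj] by simp
  finally have z: "(\<Sum>w\<in>?c ` B. v $ (inv_into B ?c w) *\<^sub>R w) = 0" by simp
  have "\<forall>w\<in>?c ` B. v $ (inv_into B ?c w) = 0"
    using ind z dependent_finite[of "?c ` B"] by auto
  hence "\<forall>k\<in>B. v$k = 0" using inv_into_f_f[OF inj] by fastforce
  thus ?thesis using assms(3) by (metis vec_eq_iff zero_index)
qed

lemma basis_ex1:
  fixes A :: "real^'n^'m"
  assumes "is_basis A B"
  shows "\<exists>!v. A *v v = y \<and> (\<forall>k. k \<notin> B \<longrightarrow> v $ k = 0)"
proof -
  obtain v where v: "A *v v = y \<and> (\<forall>k. k \<notin> B \<longrightarrow> v $ k = 0)" using basis_exists[OF assms] by blast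
  have "w = v" if "A *v w = y \<and> (\<forall>k. k \<notin> B \<longrightarrow> w $ k = 0)" for w
    using basis_unique[OF assms, of "w - v"] that v by (simp add: matrix_vector_mult_diff_distrib)
  thus ?thesis using v by blast
qed

lemma basic_sol_prop:
  fixes A :: "real^'n^'m"
  assumes "is_basis A B"
  shows "A *v basic_sol A b B = b \<and> (\<forall>k. k \<notin> B \<longrightarrow> basic_sol A b B $ k = 0)"
  unfolding basic_sol_def by (rule theI'[OF basis_ex1[OF assms]])

lemma ray_ex1:
  fixes A :: "real^'n^'m"
  assumes "is_basis A B" "j \<notin> B"
  shows "\<exists>!r. A *v r = 0 \<and> r $ j = 1 \<and> (\<forall>k. k \<notin> B \<and> k \<noteq> j \<longrightarrow> r $ k = 0)"
proof -
  obtain v where v: "A *v v = - (A *v axis j 1) \<and> (\<forall>k. k \<notin> B \<longrightarrow> v $ k = 0)"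
    using basis_exists[OF assms(1)] by blast
  let ?r = "v + axis j 1"
  have r: "A *v ?r = 0 \<and> ?r $ j = 1 \<and> (\<forall>k. k \<notin> B \<and> k \<noteq> j \<longrightarrow> ?r $ k = 0)"
    using v assms(2) by (auto simp: matrix_vector_right_distrib axis_def)
  have "w = ?r" if "A *v w = 0 \<and> w $ j = 1 \<and> (\<forall>k. k \<notin> B \<and> k \<noteq> j \<longrightarrow> w $ k = 0)" for w
  proof -
    have "w - ?r = 0"
    proof (rule basis_unique[OF assms(1)])
      show "A *v (w - ?r) = 0" using that r by (simp add: matrix_vector_mult_diff_distrib)
      show "\<forall>k. k \<notin> B \<longrightarrow> (w - ?r) $ k = 0"
      proof (intro allI impI)
        fix k assume "k \<notin> B"
        thus "(w - ?r) $ k = 0" using that r by (cases "k = j") auto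
      qed
    qed
    thus ?thesis by simp
  qed
  thus ?thesis using r by blast
qed

lemma ray_prop:
  fixes A :: "real^'n^'m"
  assumes "is_basis A B" "j \<notin> B"
  shows "A *v ray A B j = 0 \<and> ray A B j $ j = 1 \<and> (\<forall>k. k \<notin> B \<and> k \<noteq> j \<longrightarrow> ray A B j $ k = 0)"
  unfolding ray_def by (rule theI'[OF ray_ex1[OF assms]])

lemma PB_rep:
  fixes A :: "real^'n^'m"
  assumes "is_basis A B" "x \<in> PB A b B"
  shows "x = basic_sol A b B + (\<Sum>j\<in>UNIV - B. x $ j *\<^sub>R ray A B j)"
proof -
  let ?w = "x - basic_sol A b B - (\<Sum>j\<in>UNIV - B. x $ j *\<^sub>R ray A B j)"
  have "A *v (\<Sum>j\<in>UNIV - B. x $ j *\<^sub>R ray A B j) = (\<Sum>j\<in>UNIV - B. x $ j *\<^sub>R (A *v ray A B j))"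
    by (simp add: linear_sum[OF matrix_vector_mul_linear[of A]] matrix_vector_mult_scaleR)
  also have "\<dots> = 0" using ray_prop[OF assms(1)] by simp
  finally have a0: "A *v (\<Sum>j\<in>UNIV - B. x $ j *\<^sub>R ray A B j) = 0" .
  have "?w = 0"
  proof (rule basis_unique[OF assms(1)])
    show "A *v ?w = 0" using a0 basic_sol_prop[OF assms(1)] assms(2)
      by (simp add: matrix_vector_mult_diff_distrib PB_def)
    show "\<forall>k. k \<notin> B \<longrightarrow> ?w $ k = 0"
    proof (intro allI impI)
      fix k assume k: "k \<notin> B"
      have "(\<Sum>j\<in>UNIV - B. x $ j *\<^sub>R ray A B j) $ k = (\<Sum>j\<in>UNIV - B. x $ j * ray A B j $ k)"
        by (simp add: sum_component)
      also have "\<dots> = x $ k * ray A B k $ k + (\<Sum>j\<in>UNIV - B - {k}. x $ j * ray A B j $ k)"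
        using k by (subst sum.remove[of _ k]) auto
      also have "(\<Sum>j\<in>UNIV - B - {k}. x $ j * ray A B j $ k) = 0"
        using ray_prop[OF assms(1)] k by (intro sum.neutral) auto
      finally show "?w $ k = 0" using ray_prop[OF assms(1) k] basic_sol_prop[OF assms(1)] k by simp
    qed
  qed
  thus ?thesis by (simp add: algebra_simps)
qed



lemma recc_zero: "0 \<in> recc K" by (simp add: recc_def)

lemma recc_add: "d1 \<in> recc K \<Longrightarrow> d2 \<in> recc K \<Longrightarrow> d1 + d2 \<in> recc K"
  unfolding recc_def
proof (clarify)
  fix x t assume h1: "\<forall>x\<in>K. \<forall>t\<ge>0. x + t *\<^sub>R d1 \<in> K" and h2: "\<forall>x\<in>K. \<forall>t\<ge>0. x + t *\<^sub>R d2 \<in> K"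
    and x: "x \<in> K" and t: "0 \<le> (t::real)"
  have "x + t *\<^sub>R d1 \<in> K" using h1 x t by blast
  hence "(x + t *\<^sub>R d1) + t *\<^sub>R d2 \<in> K" using h2 t by blast
  thus "x + t *\<^sub>R (d1 + d2) \<in> K" by (simp add: algebra_simps)
qed

lemma recc_scale: "d \<in> recc K \<Longrightarrow> 0 \<le> c \<Longrightarrow> c *\<^sub>R d \<in> recc K"
  unfolding recc_def
proof (clarify)
  fix x t assume h: "\<forall>x\<in>K. \<forall>t\<ge>0. x + t *\<^sub>R d \<in> K" and c: "0 \<le> c" and x: "x \<in> K" and t: "0 \<le> (t::real)"
  have "x + (t * c) *\<^sub>R d \<in> K" using h x t c by simp
  thus "x + t *\<^sub>R (c *\<^sub>R d) \<in> K" by simp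
qed

lemma recc_sum:
  assumes "finite I" "\<And>i. i \<in> I \<Longrightarrow> 0 \<le> c i \<and> v i \<in> recc K"
  shows "(\<Sum>i\<in>I. c i *\<^sub>R v i) \<in> recc K"
  using assms
proof (induction I rule: finite_induct)
  case empty thus ?case by (simp add: recc_zero)
next
  case (insert a F)
  thus ?case by (simp add: recc_add recc_scale)
qed

lemma conv_scale:
  fixes R :: "'a::real_vector set"
  assumes R: "\<And>y s. y \<in> R \<Longrightarrow> 1 \<le> s \<Longrightarrow> s *\<^sub>R y \<in> R"
    and y: "y \<in> convex hull R" and s: "1 \<le> s"
  shows "s *\<^sub>R y \<in> convex hull R"
proof -
  have "s *\<^sub>R y \<in> (\<lambda>x. s *\<^sub>R x) ` (convex hull R)" using y by blast
  also have "\<dots> = convex hull ((\<lambda>x. s *\<^sub>R x) ` R)" by (simp add: convex_hull_scaling)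
  also have "\<dots> \<subseteq> convex hull R" using R s by (intro hull_mono) auto
  finally show ?thesis .
qed

lemma conv_ray_recc:
  fixes r :: "'n \<Rightarrow> 'a::real_vector" and a :: "'n \<Rightarrow> ereal" and D :: "'n set"
  defines "R \<equiv> (\<Union>j\<in>D. {t *\<^sub>R r j | t. ereal t > a j})"
  assumes a0: "\<And>j. 0 \<le> a j" and i: "i \<in> D" and ai: "a i \<noteq> \<infinity>"
    and y: "y \<in> convex hull R" and t: "0 \<le> t"
  shows "y + t *\<^sub>R r i \<in> convex hull R"
proof (cases "t = 0")
  case True thus ?thesis using y by simp
next
  case False
  hence tp: "0 < t" using t by simp
  obtain al where al: "a i = ereal al" using ai a0[of i] by (cases "a i") auto
  define e where "e = t / (\<bar>al\<bar> + t + 1)"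
  have e0: "0 < e" and e1: "e < 1" using tp by (auto simp: e_def field_simps)
  have te: "t / e = \<bar>al\<bar> + t + 1" using tp by (simp add: e_def)
  have Rs: "s *\<^sub>R z \<in> R" if "z \<in> R" "1 \<le> s" for z s
  proof -
    from that obtain j tt where j: "j \<in> D" "ereal tt > a j" "z = tt *\<^sub>R r j" unfolding R_def by blast
    have "0 \<le> tt" using j(2) a0[of j] by (metis ereal_less_eq(5) less_imp_le order_le_less_trans not_le)
    hence "tt \<le> s * tt" using that(2) by (simp add: mult_le_cancel_right1)
    hence "ereal (s * tt) > a j" using j(2) by (meson ereal_less_eq(3) order_less_le_trans)
    thus ?thesis using j unfolding R_def by auto
  qed
  have p1: "(1 / (1 - e)) *\<^sub>R y \<in> convex hull R"
    using conv_scale[OF Rs y] e0 e1 by simp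
  have "ereal (t / e) > a i" using al te tp by simp
  hence "(t / e) *\<^sub>R r i \<in> R" using i unfolding R_def by blast
  hence p2: "(t / e) *\<^sub>R r i \<in> convex hull R" by (simp add: hull_inc)
  have "(1 - e) *\<^sub>R ((1 / (1 - e)) *\<^sub>R y) + e *\<^sub>R ((t / e) *\<^sub>R r i) \<in> convex hull R"
    using convexD[OF convex_convex_hull p1 p2, of "1 - e" e] e0 e1 by simp
  moreover have "(1 - e) *\<^sub>R ((1 / (1 - e)) *\<^sub>R y) + e *\<^sub>R ((t / e) *\<^sub>R r i) = y + t *\<^sub>R r i"
    using e0 e1 by simp
  ultimately show ?thesis by simp
qed

lemma conv_point:
  fixes r :: "'n \<Rightarrow> 'a::real_vector" and a :: "'n \<Rightarrow> ereal" and D :: "'n set"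
  defines "R \<equiv> (\<Union>j\<in>D. {t *\<^sub>R r j | t. ereal t > a j})"
  assumes S: "finite S" "S \<noteq> {}" "S \<subseteq> D" and al: "\<And>j. j \<in> S \<Longrightarrow> a j = ereal (al j) \<and> 0 < al j"
    and c: "\<And>j. j \<in> S \<Longrightarrow> 0 \<le> c j" and cs: "1 < sum c S"
  shows "(\<Sum>j\<in>S. (c j * al j) *\<^sub>R r j) \<in> convex hull R"
proof -
  let ?s = "sum c S"
  have "(\<Sum>j\<in>S. (c j / ?s) *\<^sub>R ((?s * al j) *\<^sub>R r j)) \<in> convex hull R"
  proof (rule convex_sum[OF S(1) convex_convex_hull])
    show "(\<Sum>j\<in>S. c j / ?s) = 1" using cs by (simp add: sum_divide_distrib[symmetric])
    show "\<And>j. j \<in> S \<Longrightarrow> 0 \<le> c j / ?s" using c cs by simp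
    show "(?s * al j) *\<^sub>R r j \<in> convex hull R" if j: "j \<in> S" for j
    proof -
      have "al j < ?s * al j" using al[OF j] cs by simp
      hence "ereal (?s * al j) > a j" using al[OF j] by simp
      hence "(?s * al j) *\<^sub>R r j \<in> R" using j S(3) unfolding R_def by blast
      thus ?thesis by (simp add: hull_inc)
    qed
  qed
  moreover have "(\<Sum>j\<in>S. (c j / ?s) *\<^sub>R ((?s * al j) *\<^sub>R r j)) = (\<Sum>j\<in>S. (c j * al j) *\<^sub>R r j)"
    using cs by (intro sum.cong) auto
  ultimately show ?thesis by simp
qed



lemma alpha_nonneg: "0 \<le> alpha A b B C j"
  unfolding alpha_def by (rule Inf_greatest) auto

lemma G_sub_GC: "g \<in> G A b B C D \<Longrightarrow> g \<in> GC A b B C D"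
  unfolding GC_def by (rule CollectI, rule exI[of _ g], rule exI[of _ 0]) (simp add: recc_zero)

lemma ray_recc_GC:
  assumes i: "i \<in> D" and ai: "alpha A b B C i \<noteq> \<infinity>"
  shows "ray A B i \<in> recc (GC A b B C D)"
  unfolding recc_def
proof (clarify)
  fix z and t :: real assume z: "z \<in> GC A b B C D" and t: "0 \<le> t"
  let ?R = "\<Union>j\<in>D. {t *\<^sub>R ray A B j | t. ereal t > alpha A b B C j}"
  from z obtain y d where y: "y \<in> convex hull ?R" and d: "d \<in> recc C"
    and zz: "z = (basic_sol A b B + y) + d"
    unfolding GC_def G_def by blast
  have "y + t *\<^sub>R ray A B i \<in> convex hull ?R"
    using conv_ray_recc[where a="alpha A b B C" and r="ray A B" and D=D, OF alpha_nonneg i ai y t] by simp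
  hence "basic_sol A b B + (y + t *\<^sub>R ray A B i) \<in> G A b B C D" unfolding G_def by blast
  hence "(basic_sol A b B + (y + t *\<^sub>R ray A B i)) + d \<in> GC A b B C D" unfolding GC_def using d by blast
  thus "z + t *\<^sub>R ray A B i \<in> GC A b B C D" using zz by (simp add: algebra_simps)
qed

lemma gamma_dir:
  assumes i: "i \<in> D" and ai: "alpha A b B C i \<noteq> \<infinity>" and g0: "0 \<le> g"
    and gl: "ereal g < gamma A b B C D i j"
  shows "real_of_ereal (alpha A b B C i) *\<^sub>R ray A B i + g *\<^sub>R ray A B j \<in> recc (GC A b B C D)"
proof -
  let ?a = "real_of_ereal (alpha A b B C i)"
  have a0: "0 \<le> ?a" using alpha_nonneg[of A b B C i] by (simp add: real_of_ereal_pos)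
  have ra: "?a *\<^sub>R ray A B i \<in> recc (GC A b B C D)" using recc_scale[OF ray_recc_GC[OF i ai] a0] .
  from gl obtain h where h: "0 \<le> h" "?a *\<^sub>R ray A B i + h *\<^sub>R ray A B j \<in> recc (GC A b B C D)" "g < h"
    unfolding gamma_def less_Sup_iff by auto
  have hp: "0 < h" using h g0 by simp
  have "(g / h) *\<^sub>R (?a *\<^sub>R ray A B i + h *\<^sub>R ray A B j) + (1 - g / h) *\<^sub>R (?a *\<^sub>R ray A B i) \<in> recc (GC A b B C D)"
    using h hp g0 by (intro recc_add[OF recc_scale[OF h(2)] recc_scale[OF ra]]) auto
  moreover have "(g / h) *\<^sub>R (?a *\<^sub>R ray A B i + h *\<^sub>R ray A B j) + (1 - g / h) *\<^sub>R (?a *\<^sub>R ray A B i)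
      = ?a *\<^sub>R ray A B i + g *\<^sub>R ray A B j"
    using hp by (simp add: algebra_simps)
  ultimately show ?thesis by simp
qed



lemma choose_g:
  fixes xj dl :: real and ep :: ereal
  assumes ep0: "0 < ep" and xj: "0 \<le> xj" and dl: "0 < dl"
  shows "\<exists>g. 0 < g \<and> ereal g < ep \<and> xj / g \<le> ediv xj ep + dl"
proof (cases ep)
  case PInf
  define g where "g = (xj + 1) / dl"
  have "xj / g = xj * dl / (xj + 1)" using xj dl by (simp add: g_def field_simps)
  also have "\<dots> \<le> dl" using xj dl by (simp add: field_simps)
  finally show ?thesis using PInf xj dl by (intro exI[of _ g]) (auto simp: g_def ediv_def)
next
  case MInf thus ?thesis using ep0 by simp
next
  case (real e)
  have e0: "0 < e" using ep0 real by simp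
  define g where "g = e * (xj + 1) / (xj + 1 + dl * e)"
  have de: "0 < dl * e" using dl e0 by simp
  have g0: "0 < g" unfolding g_def using e0 xj de by (intro divide_pos_pos mult_pos_pos) auto
  have den: "0 < xj + 1 + dl*e" using xj de by simp
  have "e * (xj+1) < e * (xj + 1 + dl*e)" using e0 de by (intro mult_strict_left_mono) auto
  hence ge: "g < e" unfolding g_def using den by (simp add: divide_less_eq)
  have "xj / g = xj / e + xj * dl / (xj + 1)" using e0 xj dl den by (simp add: g_def field_simps)
  also have "xj * dl / (xj + 1) \<le> dl" using xj dl by (simp add: field_simps)
  finally show ?thesis using real g0 ge by (intro exI[of _ g]) (auto simp: ediv_def)
qed

theorem theorem3:
  fixes A :: "real^'n^'m" and b :: "real^'m" and B :: "'n set"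
    and C :: "(real^'n) set" and D S :: "'n set" and x :: "real^'n"
  assumes full_rank: "rank A = CARD('m)"
    and basis: "is_basis A B"
    and feasible: "\<forall>i. 0 \<le> basic_sol A b B $ i"
    and C_open: "open C" and C_convex: "convex C"
    and xbar_notin: "basic_sol A b B \<notin> closure C"
    and recc_sub: "recc C \<subseteq> recc (PB A b B)"
    and D_sub: "D \<subseteq> N1 A b B C \<union> N2 A b B C"
    and S_sub: "S \<subseteq> M A b B C D"
    and x_in: "x \<in> PB A b B - GC A b B C D"
  shows "(\<Sum>j\<in>S. x $ j / real_of_ereal (alpha A b B C j))
         - (\<Sum>j\<in>UNIV - B - D. ediv (x $ j) (eps A b B C D S j)) \<le> 1"
proof (rule ccontr)
  assume H: "\<not> ?thesis"
  let ?al = "\<lambda>j. real_of_ereal (alpha A b B C j)"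
  let ?r = "ray A B"
  let ?xb = "basic_sol A b B"
  let ?ND = "UNIV - B - D"
  define \<sigma> where "\<sigma> = (\<Sum>j\<in>S. x $ j / ?al j)"
  define \<tau> where "\<tau> = (\<Sum>j\<in>?ND. ediv (x $ j) (eps A b B C D S j))"
  have H1: "\<sigma> - \<tau> > 1" using H by (simp add: \<sigma>_def \<tau>_def)
  have SD: "S \<subseteq> D" using S_sub by (auto simp: M_def)
  have DN: "D \<inter> B = {}" using D_sub by (auto simp: N1_def N2_def)
  have alD: "alpha A b B C j = ereal (?al j) \<and> 0 < ?al j" if "j \<in> D" for j
  proof -
    have "0 < alpha A b B C j" "alpha A b B C j < \<infinity>" using D_sub that by (auto simp: N1_def N2_def)
    thus ?thesis by (cases "alpha A b B C j") auto
  qed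
  have aninf: "alpha A b B C j \<noteq> \<infinity>" if "j \<in> D" for j using D_sub that by (auto simp: N1_def N2_def)
  have xnn: "0 \<le> x $ j" if "j \<notin> B" for j using x_in that by (auto simp: PB_def)
  have gam: "0 < gamma A b B C D i j" if "i \<in> S" "j \<in> ?ND" for i j
    using S_sub that by (auto simp: M_def)
  have Sne: "S \<noteq> {}"
  proof
    assume "S = {}"
    hence "\<sigma> = 0" "\<tau> = 0" by (auto simp: \<sigma>_def \<tau>_def eps_def ediv_def)
    thus False using H1 by simp
  qed
  have fS: "finite S" by simp
  define \<Delta> where "\<Delta> = \<sigma> - 1 - \<tau>"
  have \<Delta>0: "0 < \<Delta>" using H1 by (simp add: \<Delta>_def)
  define dl where "dl = \<Delta> / (real CARD('n) + 1)"
  have dl0: "0 < dl" using \<Delta>0 by (simp add: dl_def)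
  have "\<forall>j\<in>?ND. \<exists>g. 0 < g \<and> ereal g < eps A b B C D S j \<and> x $ j / g \<le> ediv (x $ j) (eps A b B C D S j) + dl"
  proof
    fix j assume j: "j \<in> ?ND"
    have "0 < eps A b B C D S j" using Sne gam j by (simp add: eps_def Min_gr_iff)
    thus "\<exists>g. 0 < g \<and> ereal g < eps A b B C D S j \<and> x $ j / g \<le> ediv (x $ j) (eps A b B C D S j) + dl"
      using choose_g[OF _ xnn dl0] j by simp
  qed
  then obtain g where g: "\<And>j. j \<in> ?ND \<Longrightarrow> 0 < g j \<and> ereal (g j) < eps A b B C D S j \<and> x $ j / g j \<le> ediv (x $ j) (eps A b B C D S j) + dl"
    by metis
  have gg: "ereal (g j) < gamma A b B C D i j" if "i \<in> S" "j \<in> ?ND" for i j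
  proof -
    have "eps A b B C D S j \<le> gamma A b B C D i j" using that Sne by (simp add: eps_def)
    thus ?thesis using g[OF that(2)] by (meson order_less_le_trans)
  qed
  define T where "T = (\<Sum>j\<in>?ND. x $ j / g j)"
  have "T \<le> (\<Sum>j\<in>?ND. ediv (x $ j) (eps A b B C D S j) + dl)"
    unfolding T_def using g by (intro sum_mono) auto
  also have "\<dots> = \<tau> + real (card ?ND) * dl" by (simp add: \<tau>_def sum.distrib)
  also have "real (card ?ND) * dl \<le> real CARD('n) * dl"
    using dl0 card_mono[of UNIV ?ND] by (intro mult_right_mono) auto
  also have "real CARD('n) * dl < \<Delta>" using \<Delta>0 by (simp add: dl_def field_simps)
  finally have Tl: "\<sigma> - T > 1" by (simp add: \<Delta>_def)
  have T0: "0 \<le> T" unfolding T_def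
  proof (intro sum_nonneg)
    fix j assume j: "j \<in> ?ND"
    thus "0 \<le> x $ j / g j" using g[OF j] xnn[of j] by simp
  qed
  have \<sigma>0: "0 < \<sigma>" using Tl T0 by simp
  define w where "w = (\<lambda>i. x $ i / ?al i)"
  define c where "c = (\<lambda>i. w i * (1 - T / \<sigma>))"
  have w0: "0 \<le> w i" if "i \<in> S" for i
  proof -
    have "i \<in> D" "i \<notin> B" using SD DN that by auto
    thus ?thesis using xnn[of i] alD[of i] by (simp add: w_def)
  qed
  have c0: "0 \<le> c i" if "i \<in> S" for i
  proof -
    have "0 \<le> 1 - T / \<sigma>" using Tl \<sigma>0 by (simp add: field_simps)
    thus ?thesis using w0[OF that] by (simp add: c_def)
  qed
  have sw: "sum w S = \<sigma>" by (simp add: w_def \<sigma>_def)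
  have "sum c S = sum w S * (1 - T / \<sigma>)" by (simp add: c_def sum_distrib_right)
  also have "\<dots> = \<sigma> * (1 - T / \<sigma>)" using sw by simp
  also have "\<dots> = \<sigma> - T" using \<sigma>0 by (simp add: right_diff_distrib)
  finally have sc: "sum c S = \<sigma> - T" .
  have alS: "\<And>j. j \<in> S \<Longrightarrow> alpha A b B C j = ereal (?al j) \<and> 0 < ?al j" using alD SD by auto
  let ?R = "\<Union>j\<in>D. {t *\<^sub>R ?r j | t. ereal t > alpha A b B C j}"
  define p where "p = ?xb + (\<Sum>i\<in>S. (c i * ?al i) *\<^sub>R ?r i)"
  have "(\<Sum>i\<in>S. (c i * ?al i) *\<^sub>R ?r i) \<in> convex hull ?R"
    using conv_point[where a="alpha A b B C" and r="ray A B" and D=D and al="\<lambda>j. real_of_ereal (alpha A b B C j)" and c=c, OF fS Sne SD alS c0] sc Tl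
    by simp
  hence pG: "p \<in> G A b B C D" unfolding p_def G_def by blast
  hence pGC: "p \<in> GC A b B C D" by (rule G_sub_GC)
  define V where "V = (\<Sum>j\<in>?ND. x $ j *\<^sub>R ?r j)"
  define rem where "rem = (\<Sum>i\<in>S. (w i / \<sigma>) *\<^sub>R (\<Sum>j\<in>?ND. (x $ j / g j) *\<^sub>R (?al i *\<^sub>R ?r i + g j *\<^sub>R ?r j)))
      + (\<Sum>j\<in>D - S. x $ j *\<^sub>R ?r j)"
  have remR: "rem \<in> recc (GC A b B C D)"
    unfolding rem_def
  proof (rule recc_add)
    show "(\<Sum>j\<in>D - S. x $ j *\<^sub>R ?r j) \<in> recc (GC A b B C D)"
    proof (rule recc_sum)
      fix j assume j: "j \<in> D - S"
      hence "j \<in> D" "j \<notin> B" using DN by auto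
      thus "0 \<le> x $ j \<and> ?r j \<in> recc (GC A b B C D)" using xnn ray_recc_GC aninf by blast
    qed simp
    show "(\<Sum>i\<in>S. (w i / \<sigma>) *\<^sub>R (\<Sum>j\<in>?ND. (x $ j / g j) *\<^sub>R (?al i *\<^sub>R ?r i + g j *\<^sub>R ?r j))) \<in> recc (GC A b B C D)"
    proof (rule recc_sum)
      fix i assume i: "i \<in> S"
      have "(\<Sum>j\<in>?ND. (x $ j / g j) *\<^sub>R (?al i *\<^sub>R ?r i + g j *\<^sub>R ?r j)) \<in> recc (GC A b B C D)"
      proof (rule recc_sum)
        fix j assume j: "j \<in> ?ND"
        have "0 \<le> x $ j / g j" using g[OF j] xnn[of j] j by simp
        moreover have "?al i *\<^sub>R ?r i + g j *\<^sub>R ?r j \<in> recc (GC A b B C D)"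
          using gamma_dir[of i D A b B C "g j" j] i SD aninf g[OF j] gg[OF i j] by auto
        ultimately show "0 \<le> x $ j / g j \<and> ?al i *\<^sub>R ?r i + g j *\<^sub>R ?r j \<in> recc (GC A b B C D)" by simp
      qed simp
      thus "0 \<le> w i / \<sigma> \<and> (\<Sum>j\<in>?ND. (x $ j / g j) *\<^sub>R (?al i *\<^sub>R ?r i + g j *\<^sub>R ?r j)) \<in> recc (GC A b B C D)"
        using w0[OF i] \<sigma>0 by simp
    qed simp
  qed
  have E1: "(\<Sum>j\<in>?ND. (x $ j / g j) *\<^sub>R (?al i *\<^sub>R ?r i + g j *\<^sub>R ?r j)) = (T * ?al i) *\<^sub>R ?r i + V" for i
  proof -
    have "(\<Sum>j\<in>?ND. (x $ j / g j) *\<^sub>R (?al i *\<^sub>R ?r i + g j *\<^sub>R ?r j))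
        = (\<Sum>j\<in>?ND. (x $ j / g j * ?al i) *\<^sub>R ?r i) + (\<Sum>j\<in>?ND. (x $ j / g j * g j) *\<^sub>R ?r j)"
      by (simp add: scaleR_add_right sum.distrib)
    also have "(\<Sum>j\<in>?ND. (x $ j / g j * ?al i) *\<^sub>R ?r i) = (T * ?al i) *\<^sub>R ?r i"
      by (simp add: T_def scaleR_sum_left[symmetric] sum_distrib_right)
    also have "(\<Sum>j\<in>?ND. (x $ j / g j * g j) *\<^sub>R ?r j) = V"
      unfolding V_def
    proof (rule sum.cong)
      fix j assume j: "j \<in> ?ND"
      thus "(x $ j / g j * g j) *\<^sub>R ?r j = x $ j *\<^sub>R ?r j" using g[OF j] by simp
    qed simp
    finally show ?thesis .
  qed
  have sw1: "(\<Sum>i\<in>S. w i / \<sigma>) = 1" using sw \<sigma>0 by (simp add: sum_divide_distrib[symmetric])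
  have E2: "rem = (\<Sum>i\<in>S. (w i / \<sigma> * T * ?al i) *\<^sub>R ?r i) + V + (\<Sum>j\<in>D - S. x $ j *\<^sub>R ?r j)"
  proof -
    have "rem = (\<Sum>i\<in>S. (w i / \<sigma>) *\<^sub>R ((T * ?al i) *\<^sub>R ?r i + V)) + (\<Sum>j\<in>D - S. x $ j *\<^sub>R ?r j)"
      unfolding rem_def E1 ..
    also have "(\<Sum>i\<in>S. (w i / \<sigma>) *\<^sub>R ((T * ?al i) *\<^sub>R ?r i + V))
        = (\<Sum>i\<in>S. (w i / \<sigma> * T * ?al i) *\<^sub>R ?r i) + (\<Sum>i\<in>S. w i / \<sigma>) *\<^sub>R V"
      by (simp add: scaleR_add_right sum.distrib scaleR_sum_left mult.assoc)
    finally show ?thesis using sw1 by simp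
  qed
  have E3: "(\<Sum>i\<in>S. (c i * ?al i) *\<^sub>R ?r i) + (\<Sum>i\<in>S. (w i / \<sigma> * T * ?al i) *\<^sub>R ?r i)
      = (\<Sum>i\<in>S. x $ i *\<^sub>R ?r i)"
  proof -
    have "(\<Sum>i\<in>S. (c i * ?al i) *\<^sub>R ?r i) + (\<Sum>i\<in>S. (w i / \<sigma> * T * ?al i) *\<^sub>R ?r i)
       = (\<Sum>i\<in>S. (c i * ?al i + w i / \<sigma> * T * ?al i) *\<^sub>R ?r i)"
      by (simp add: sum.distrib scaleR_add_left)
    also have "\<dots> = (\<Sum>i\<in>S. x $ i *\<^sub>R ?r i)"
    proof (rule sum.cong)
      fix i assume i: "i \<in> S"
      have "c i * ?al i + w i / \<sigma> * T * ?al i = w i * ?al i"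
        by (simp add: c_def algebra_simps)
      also have "\<dots> = x $ i" using alS[OF i] by (simp add: w_def)
      finally show "(c i * ?al i + w i / \<sigma> * T * ?al i) *\<^sub>R ?r i = x $ i *\<^sub>R ?r i" by simp
    qed simp
    finally show ?thesis .
  qed
  have E4: "(\<Sum>j\<in>UNIV - B. x $ j *\<^sub>R ?r j) = (\<Sum>i\<in>S. x $ i *\<^sub>R ?r i) + (\<Sum>j\<in>D - S. x $ j *\<^sub>R ?r j) + V"
  proof -
    have U: "UNIV - B = (S \<union> (D - S)) \<union> ?ND" using SD DN by auto
    let ?f = "\<lambda>j. x $ j *\<^sub>R ?r j"
    have "sum ?f (UNIV - B) = sum ?f ((S \<union> (D - S)) \<union> ?ND)" by (rule arg_cong[where f="sum ?f", OF U])
    also have "\<dots> = sum ?f (S \<union> (D - S)) + sum ?f ?ND" using SD by (intro sum.union_disjoint) auto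
    also have "sum ?f (S \<union> (D - S)) = sum ?f S + sum ?f (D - S)" by (rule sum.union_disjoint) auto
    finally show ?thesis unfolding V_def .
  qed
  have "x = ?xb + (\<Sum>j\<in>UNIV - B. x $ j *\<^sub>R ?r j)" using PB_rep[OF basis] x_in by blast
  also have "\<dots> = p + rem" unfolding E2 E4 p_def E3[symmetric] by (simp add: algebra_simps)
  also have "\<dots> = p + 1 *\<^sub>R rem" by simp
  finally have xe: "x = p + 1 *\<^sub>R rem" .
  have "p + 1 *\<^sub>R rem \<in> GC A b B C D" using remR pGC unfolding recc_def mem_Collect_eq by (metis zero_le_one)
  hence "x \<in> GC A b B C D" using xe by simp
  thus False using x_in by simp
qed
end
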